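(* Let $S\subset\{0,1\}^N$ with $|S|=K$ and let $1\le m\le K$ be an integer. Then $$\left\|(\ket{\psi_S}\bra{\psi_S})^{\otimes m}-\ket{\psi^{(m)}_{S,{\rm uni}}}\bra{\psi^{(m)}_{S,{\rm uni}}}\right\|_{\rm tr}\le O\!\left(\frac{m}{\sqrt K}\right),$$ i.e. the left side is at most $Cm/\sqrt K$ for a constant $C$ independent of $N,K,m,S$.
   Context: Work on $N$ qubits with computational basis $\{\ket{\mathbf z}:\mathbf z\in\{0,1\}^N\}$. The subset state is $\ket{\psi_S}=|S|^{-1/2}\sum_{\mathbf z\in S}\ket{\mathbf z}$. For a set $S'$ of $m$ distinct basis bitstrings, the unique-type state is $\ket{S'}=(m!)^{-1/2}\sum \ket{\mathbf z_1}\otimes\cdots\otimes\ket{\mathbf z_m}$, the sum running over all $m!$ orderings $(\mathbf z_1,\dots,\mathbf z_m)$ of the elements of $S'$. The pure unique-type state associated with $S$ is $\ket{\psi^{(m)}_{S,{\rm uni}}}=\binom{K}{m}^{-1/2}\sum_{S'\subset S,\,|S'|=m}\ket{S'}$. $\|A\|_{\rm tr}={\rm Tr}\sqrt{A^\dagger A}$. *)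

theory Defs
  imports "HOL-Analysis.Analysis"
begin

(* Operators on the Hilbert space with orthonormal basis indexed by a finite set I are
   represented by their matrices  'i => 'i => complex  (entries outside I are irrelevant,
   required to be 0 where uniqueness matters); kets are functions 'i => complex. *)

definition mmul :: "'i set \<Rightarrow> ('i \<Rightarrow> 'i \<Rightarrow> complex) \<Rightarrow> ('i \<Rightarrow> 'i \<Rightarrow> complex) \<Rightarrow> ('i \<Rightarrow> 'i \<Rightarrow> complex)" where
  "mmul I A B = (\<lambda>i k. \<Sum>j\<in>I. A i j * B j k)"

definition madj :: "('i \<Rightarrow> 'i \<Rightarrow> complex) \<Rightarrow> ('i \<Rightarrow> 'i \<Rightarrow> complex)" where
  "madj A = (\<lambda>i j. cnj (A j i))"

definition mtrace :: "'i set \<Rightarrow> ('i \<Rightarrow> 'i \<Rightarrow> complex) \<Rightarrow> complex" where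
  "mtrace I A = (\<Sum>i\<in>I. A i i)"

definition psd :: "'i set \<Rightarrow> ('i \<Rightarrow> 'i \<Rightarrow> complex) \<Rightarrow> bool" where
  "psd I B = (\<forall>v. (\<Sum>i\<in>I. \<Sum>j\<in>I. cnj (v i) * B i j * v j) \<in> \<real> \<and>
                   0 \<le> Re (\<Sum>i\<in>I. \<Sum>j\<in>I. cnj (v i) * B i j * v j))"

definition msqrt :: "'i set \<Rightarrow> ('i \<Rightarrow> 'i \<Rightarrow> complex) \<Rightarrow> ('i \<Rightarrow> 'i \<Rightarrow> complex)" where
  "msqrt I P = (THE B. psd I B \<and> (\<forall>i j. (i \<notin> I \<or> j \<notin> I) \<longrightarrow> B i j = 0) \<and>
                       (\<forall>i\<in>I. \<forall>j\<in>I. mmul I B B i j = P i j))"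

definition trace_norm :: "'i set \<Rightarrow> ('i \<Rightarrow> 'i \<Rightarrow> complex) \<Rightarrow> real" where
  "trace_norm I A = Re (mtrace I (msqrt I (mmul I (madj A) A)))"

definition ketbra :: "('i \<Rightarrow> complex) \<Rightarrow> ('i \<Rightarrow> complex) \<Rightarrow> ('i \<Rightarrow> 'i \<Rightarrow> complex)" where
  "ketbra a b = (\<lambda>i j. a i * cnj (b j))"

definition bitstrings :: "nat \<Rightarrow> bool list set" where
  "bitstrings N = {z. length z = N}"

(* basis of the m-fold tensor product: m-tuples (lists) of N-bit strings *)
definition tuples :: "nat \<Rightarrow> nat \<Rightarrow> bool list list set" where
  "tuples N m = {zs. length zs = m \<and> (\<forall>z\<in>set zs. z \<in> bitstrings N)}"

definition tensor_pow :: "nat \<Rightarrow> (bool list \<Rightarrow> bool list \<Rightarrow> complex) \<Rightarrow> (bool list list \<Rightarrow> bool list list \<Rightarrow> complex)" where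
  "tensor_pow m A = (\<lambda>zs ws. \<Prod>k<m. A (zs ! k) (ws ! k))"

definition basis_ket :: "bool list list \<Rightarrow> (bool list list \<Rightarrow> complex)" where
  "basis_ket os = (\<lambda>zs. if zs = os then 1 else 0)"

definition subset_state :: "bool list set \<Rightarrow> (bool list \<Rightarrow> complex)" where
  "subset_state S = (\<lambda>z. if z \<in> S then 1 / sqrt (real (card S)) else 0)"

definition unique_type_ket :: "bool list set \<Rightarrow> (bool list list \<Rightarrow> complex)" where
  "unique_type_ket S' = (\<lambda>zs. (1 / sqrt (fact (card S'))) *
      (\<Sum>os\<in>{os. distinct os \<and> set os = S'}. basis_ket os zs))"

definition uni_state :: "bool list set \<Rightarrow> nat \<Rightarrow> (bool list list \<Rightarrow> complex)" where
  "uni_state S m = (\<lambda>zs. (1 / sqrt (real (card S choose m))) *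
      (\<Sum>S'\<in>{S'. S' \<subseteq> S \<and> card S' = m}. unique_type_ket S' zs))"

end

theory Submission
  imports Defs
begin


definition ipr :: "'i set \<Rightarrow> ('i \<Rightarrow> complex) \<Rightarrow> ('i \<Rightarrow> complex) \<Rightarrow> complex" where
  "ipr I x y = (\<Sum>i\<in>I. cnj (x i) * y i)"

definition mvec :: "'i set \<Rightarrow> ('i \<Rightarrow> 'i \<Rightarrow> complex) \<Rightarrow> ('i \<Rightarrow> complex) \<Rightarrow> ('i \<Rightarrow> complex)" where
  "mvec I M x = (\<lambda>i. \<Sum>j\<in>I. M i j * x j)"

lemma mvec_mmul: "mvec I (mmul I A B) x i = mvec I A (mvec I B x) i"
proof -
  have "mvec I (mmul I A B) x i = (\<Sum>j\<in>I. \<Sum>k\<in>I. A i k * B k j * x j)"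
    by (simp add: mvec_def mmul_def sum_distrib_right)
  also have "\<dots> = (\<Sum>k\<in>I. \<Sum>j\<in>I. A i k * B k j * x j)" by (rule sum.swap)
  also have "\<dots> = mvec I A (mvec I B x) i"
    by (simp add: mvec_def sum_distrib_left mult.assoc)
  finally show ?thesis .
qed

lemma mvec_cong: "(\<And>i. i \<in> I \<Longrightarrow> x i = y i) \<Longrightarrow> mvec I M x = mvec I M y"
  unfolding mvec_def by (auto intro!: sum.cong)

lemma mvec_cong_mat: "(\<And>i j. i \<in> I \<Longrightarrow> j \<in> I \<Longrightarrow> M i j = M' i j) \<Longrightarrow> i \<in> I \<Longrightarrow> mvec I M x i = mvec I M' x i"
  unfolding mvec_def by (auto intro!: sum.cong)

lemma mvec_add: "mvec I M (\<lambda>i. x i + y i) i = mvec I M x i + mvec I M y i"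
  unfolding mvec_def by (simp add: distrib_left sum.distrib)

lemma mvec_diff: "mvec I M (\<lambda>i. x i - y i) i = mvec I M x i - mvec I M y i"
  unfolding mvec_def by (simp add: right_diff_distrib sum_subtractf)

lemma mvec_scale: "mvec I M (\<lambda>i. c * x i) i = c * mvec I M x i"
  unfolding mvec_def by (simp add: sum_distrib_left algebra_simps)

lemma mvec_basis: "j \<in> I \<Longrightarrow> finite I \<Longrightarrow> mvec I M (\<lambda>k. if k = j then 1 else 0) i = M i j"
  unfolding mvec_def by (simp add: if_distrib cong: if_cong)

lemma ipr_self: "ipr I x x = complex_of_real (\<Sum>i\<in>I. (cmod (x i))\<^sup>2)"
  unfolding ipr_def of_real_sum by (rule sum.cong) (simp_all add: complex_norm_square[symmetric] mult.commute)

lemma ipr_self_zero: assumes "finite I" "Re (ipr I x x) \<le> 0" "i \<in> I" shows "x i = 0"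
proof -
  have "(\<Sum>i\<in>I. (cmod (x i))\<^sup>2) = 0"
    using assms(2) by (simp add: ipr_self) (meson antisym sum_nonneg zero_le_power2)
  then have "(cmod (x i))\<^sup>2 = 0" using assms(1,3) by (simp add: sum_nonneg_eq_0_iff)
  then show ?thesis by simp
qed

lemma psd_form: "psd I B \<Longrightarrow> ipr I x (mvec I B x) \<in> \<real> \<and> 0 \<le> Re (ipr I x (mvec I B x))"
  unfolding psd_def ipr_def mvec_def by (simp add: sum_distrib_left mult.assoc)

lemma ipr_add_l: "ipr I (\<lambda>i. x i + y i) z = ipr I x z + ipr I y z"
  unfolding ipr_def by (simp add: distrib_right sum.distrib)
lemma ipr_add_r: "ipr I z (\<lambda>i. x i + y i) = ipr I z x + ipr I z y"
  unfolding ipr_def by (simp add: distrib_left sum.distrib)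
lemma ipr_scale_l: "ipr I (\<lambda>i. c * x i) z = cnj c * ipr I x z"
  unfolding ipr_def by (simp add: sum_distrib_left algebra_simps)
lemma ipr_scale_r: "ipr I z (\<lambda>i. c * x i) = c * ipr I z x"
  unfolding ipr_def by (simp add: sum_distrib_left algebra_simps)
lemma ipr_diff_l: "ipr I (\<lambda>i. x i - y i) z = ipr I x z - ipr I y z"
  unfolding ipr_def by (simp add: left_diff_distrib sum_subtractf)
lemma ipr_diff_r: "ipr I z (\<lambda>i. x i - y i) = ipr I z x - ipr I z y"
  unfolding ipr_def by (simp add: right_diff_distrib sum_subtractf)
lemma ipr_cong_r: "(\<And>i. i \<in> I \<Longrightarrow> x i = y i) \<Longrightarrow> ipr I z x = ipr I z y"
  unfolding ipr_def by (auto intro!: sum.cong)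
lemma ipr_cong_l: "(\<And>i. i \<in> I \<Longrightarrow> x i = y i) \<Longrightarrow> ipr I x z = ipr I y z"
  unfolding ipr_def by (auto intro!: sum.cong)
lemma ipr_basis: "finite I \<Longrightarrow> i \<in> I \<Longrightarrow> ipr I (\<lambda>k. if k = i then 1 else 0) z = z i"
proof -
  assume "finite I" "i \<in> I"
  have "ipr I (\<lambda>k. if k = i then 1 else 0) z = (\<Sum>k\<in>I. if k = i then z k else 0)"
    unfolding ipr_def by (rule sum.cong) auto
  then show ?thesis using \<open>finite I\<close> \<open>i \<in> I\<close> by simp
qed
lemma ipr_cnj: "ipr I y x = cnj (ipr I x y)"
  unfolding ipr_def by (simp add: mult.commute)

lemma quad_expand:
  "ipr I (\<lambda>k. x k + c * y k) (mvec I B (\<lambda>k. x k + c * y k)) =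
   ipr I x (mvec I B x) + c * ipr I x (mvec I B y) + cnj c * ipr I y (mvec I B x) + cnj c * c * ipr I y (mvec I B y)"
proof -
  have m: "mvec I B (\<lambda>k. x k + c * y k) = (\<lambda>k. mvec I B x k + c * mvec I B y k)"
    by (rule ext) (simp add: mvec_add mvec_scale)
  show ?thesis unfolding m
    by (simp add: ipr_add_l ipr_add_r ipr_scale_l ipr_scale_r algebra_simps)
qed

lemma psd_herm:
  assumes "psd I B" "finite I" "i \<in> I" "j \<in> I"
  shows "B j i = cnj (B i j)"
proof -
  define ei where "ei = (\<lambda>k. if k = i then (1::complex) else 0)"
  define ej where "ej = (\<lambda>k. if k = j then (1::complex) else 0)"
  have Q: "ipr I ei (mvec I B ei) = B i i" "ipr I ei (mvec I B ej) = B i j"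
          "ipr I ej (mvec I B ei) = B j i" "ipr I ej (mvec I B ej) = B j j"
    using assms by (simp_all add: ei_def ej_def ipr_basis mvec_basis)
  have r1: "B i i \<in> \<real>" "B j j \<in> \<real>" using psd_form[OF assms(1), of ei] psd_form[OF assms(1), of ej] Q by auto
  have r2: "B i i + B i j + B j i + B j j \<in> \<real>"
    using psd_form[OF assms(1), of "\<lambda>k. ei k + 1 * ej k"] unfolding quad_expand Q by simp
  have r3: "B i i + \<i> * B i j - \<i> * B j i + B j j \<in> \<real>"
    using psd_form[OF assms(1), of "\<lambda>k. ei k + \<i> * ej k"] unfolding quad_expand Q by simp
  show ?thesis using r1 r2 r3
  proof -
    have a: "Im (B i i) = 0" "Im (B j j) = 0" using r1 by (simp_all add: complex_is_Real_iff)
    have b: "Im (B i j) + Im (B j i) = 0" using r2 a by (simp add: complex_is_Real_iff)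
    have c: "Re (B i j) - Re (B j i) = 0" using r3 a by (simp add: complex_is_Real_iff)
    show ?thesis using b c by (simp add: complex_eq_iff)
  qed
qed

lemma herm_ipr:
  assumes "\<And>i j. i \<in> I \<Longrightarrow> j \<in> I \<Longrightarrow> B j i = cnj (B i j)"
  shows "ipr I (mvec I B x) y = ipr I x (mvec I B y)"
proof -
  have "ipr I (mvec I B x) y = (\<Sum>i\<in>I. \<Sum>j\<in>I. cnj (B i j) * cnj (x j) * y i)"
    by (simp add: ipr_def mvec_def sum_distrib_right cnj_sum)
  also have "\<dots> = (\<Sum>j\<in>I. \<Sum>i\<in>I. cnj (B i j) * cnj (x j) * y i)" by (rule sum.swap)
  also have "\<dots> = (\<Sum>j\<in>I. \<Sum>i\<in>I. cnj (x j) * (B j i * y i))"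
  proof (intro sum.cong refl)
    fix j i assume "j \<in> I" "i \<in> I"
    then have "cnj (B i j) = B j i" using assms[of i j] by simp
    then show "cnj (B i j) * cnj (x j) * y i = cnj (x j) * (B j i * y i)" by (simp add: mult_ac)
  qed
  also have "\<dots> = ipr I x (mvec I B y)"
    by (simp add: ipr_def mvec_def sum_distrib_left)
  finally show ?thesis .
qed


lemma kernel_zero:
  assumes "finite I" "psd I B" "\<And>i. i \<in> I \<Longrightarrow> mvec I B (mvec I B w) i = 0" "i \<in> I"
  shows "mvec I B w i = 0"
proof -
  let ?y = "mvec I B w"
  have "ipr I ?y ?y = ipr I w (mvec I B ?y)"
    by (rule herm_ipr, rule psd_herm[OF assms(2,1)])
  also have "\<dots> = ipr I w (\<lambda>i. 0)" using assms(3) by (rule ipr_cong_r)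
  also have "\<dots> = 0" by (simp add: ipr_def)
  finally show ?thesis using ipr_self_zero[OF assms(1) _ assms(4), of ?y] by simp
qed

lemma range_eig:
  fixes s :: real
  assumes "finite I" "psd I B" "s > 0" "\<And>i. i \<in> I \<Longrightarrow> mvec I B (mvec I B w) i = complex_of_real (s\<^sup>2) * w i" "i \<in> I"
  shows "mvec I B w i = complex_of_real s * w i"
proof -
  define x where "x = (\<lambda>i. mvec I B w i - s * w i)"
  have Bx: "mvec I B x i = - complex_of_real s * x i" if "i \<in> I" for i
    using assms(4)[OF that] unfolding x_def mvec_diff mvec_scale
    by (simp add: power2_eq_square algebra_simps)
  have "ipr I x (mvec I B x) = ipr I x (\<lambda>i. (- complex_of_real s) * x i)" by (rule ipr_cong_r) (use Bx in auto)
  also have "\<dots> = - complex_of_real s * ipr I x x" by (rule ipr_scale_r)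
  finally have e: "ipr I x (mvec I B x) = - complex_of_real s * ipr I x x" .
  have "0 \<le> Re (ipr I x (mvec I B x))" using psd_form[OF assms(2)] by blast
  then have "0 \<le> - s * Re (ipr I x x)" unfolding e by simp
  then have "Re (ipr I x x) \<le> 0" using assms(3) by (simp add: mult_le_0_iff)
  then have "x i = 0" using ipr_self_zero[OF assms(1) _ assms(5)] by blast
  then show ?thesis by (simp add: x_def)
qed

lemma sqrt_unique:
  assumes fin: "finite I" and s: "s \<ge> 0" and idem: "\<And>i j. i \<in> I \<Longrightarrow> j \<in> I \<Longrightarrow> mmul I Pm Pm i j = Pm i j"
    and psd: "psd I B" and sq: "\<And>i j. i \<in> I \<Longrightarrow> j \<in> I \<Longrightarrow> mmul I B B i j = complex_of_real (s\<^sup>2) * Pm i j"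
    and ij: "i \<in> I" "j \<in> I"
  shows "B i j = s * Pm i j"
proof -
  have BB: "mvec I B (mvec I B v) i = s\<^sup>2 * mvec I Pm v i" if "i \<in> I" for v i
  proof -
    have "mvec I B (mvec I B v) i = mvec I (mmul I B B) v i" by (simp add: mvec_mmul)
    also have "\<dots> = mvec I (\<lambda>i j. complex_of_real (s\<^sup>2) * Pm i j) v i"
      by (rule mvec_cong_mat) (use sq that in auto)
    also have "\<dots> = s\<^sup>2 * mvec I Pm v i" by (simp add: mvec_def sum_distrib_left mult.assoc)
    finally show ?thesis .
  qed
  have PP: "mvec I Pm (mvec I Pm v) i = mvec I Pm v i" if "i \<in> I" for v i
  proof -
    have "mvec I Pm (mvec I Pm v) i = mvec I (mmul I Pm Pm) v i" by (simp add: mvec_mmul)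
    also have "\<dots> = mvec I Pm v i" by (rule mvec_cong_mat) (use idem that in auto)
    finally show ?thesis .
  qed
  define v where "v = (\<lambda>k. if k = j then (1::complex) else 0)"
  define p where "p = mvec I Pm v"
  define q where "q = (\<lambda>k. v k - p k)"
  have Pp: "mvec I Pm p i = p i" if "i \<in> I" for i using PP[OF that] by (simp add: p_def)
  have Pq: "mvec I Pm q i = 0" if "i \<in> I" for i using Pp[OF that] by (simp add: q_def mvec_diff p_def)
  have Bq: "mvec I B q i = 0" if "i \<in> I" for i
    by (rule kernel_zero[OF fin psd _ that]) (simp add: BB Pq)
  have Bp: "mvec I B p i = s * p i" if "i \<in> I" for i
  proof (cases "s = 0")
    case True
    then show ?thesis by (simp, intro kernel_zero[OF fin psd _ that]) (simp add: BB)
  next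
    case False
    then show ?thesis by (intro range_eig[OF fin psd _ _ that]) (use s in \<open>simp_all add: BB Pp\<close>)
  qed
  have vpq: "v = (\<lambda>k. p k + q k)" by (simp add: q_def)
  have "B i j = mvec I B v i" using ij fin by (simp add: v_def mvec_basis)
  also have "\<dots> = mvec I B p i + mvec I B q i" by (subst vpq) (rule mvec_add)
  also have "\<dots> = s * p i" using Bp Bq ij by simp
  also have "\<dots> = s * Pm i j" using ij fin by (simp add: p_def v_def mvec_basis)
  finally show ?thesis .
qed

lemma msqrt_eqI:
  assumes fin: "finite I" and B0: "psd I B0" "\<And>i j. i \<notin> I \<or> j \<notin> I \<Longrightarrow> B0 i j = 0"
     "\<And>i j. i \<in> I \<Longrightarrow> j \<in> I \<Longrightarrow> mmul I B0 B0 i j = P i j"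
   and uniq: "\<And>B i j. psd I B \<Longrightarrow> (\<And>i j. i \<in> I \<Longrightarrow> j \<in> I \<Longrightarrow> mmul I B B i j = P i j) \<Longrightarrow> i \<in> I \<Longrightarrow> j \<in> I \<Longrightarrow> B i j = B0 i j"
  shows "msqrt I P = B0"
  unfolding msqrt_def
proof (rule the_equality)
  show "psd I B0 \<and> (\<forall>i j. i \<notin> I \<or> j \<notin> I \<longrightarrow> B0 i j = 0) \<and> (\<forall>i\<in>I. \<forall>j\<in>I. mmul I B0 B0 i j = P i j)"
    using B0 by blast
next
  fix B assume h: "psd I B \<and> (\<forall>i j. i \<notin> I \<or> j \<notin> I \<longrightarrow> B i j = 0) \<and> (\<forall>i\<in>I. \<forall>j\<in>I. mmul I B B i j = P i j)"
  show "B = B0"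
  proof (intro ext)
    fix i j show "B i j = B0 i j"
      using h B0(2) uniq[of B i j] by (cases "i \<in> I \<and> j \<in> I") auto
  qed
qed



lemma tn_pure:
  fixes c :: real
  assumes fin: "finite I" and aa: "ipr I a a = 1" and bb: "ipr I b b = 1"
    and ab: "ipr I a b = complex_of_real c" and c1: "c\<^sup>2 \<le> 1"
  shows "trace_norm I (\<lambda>i j. ketbra a a i j - ketbra b b i j) = 2 * sqrt (1 - c\<^sup>2)"
proof -
  have ba: "ipr I b a = complex_of_real c" using ab by (simp add: ipr_cnj[of I b a])
  define A where "A = (\<lambda>i j. ketbra a a i j - ketbra b b i j)"
  have adjA: "madj A = A" by (intro ext) (simp add: madj_def A_def ketbra_def)
  define P where "P = (\<lambda>i k. a i * cnj (a k) + b i * cnj (b k) - c * (a i * cnj (b k) + b i * cnj (a k)))"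
  have AA: "mmul I (madj A) A = P"
  proof (intro ext)
    fix i k
    have "mmul I A A i k = (\<Sum>j\<in>I. a i * cnj (a k) * (cnj (a j) * a j) - a i * cnj (b k) * (cnj (a j) * b j)
         - b i * cnj (a k) * (cnj (b j) * a j) + b i * cnj (b k) * (cnj (b j) * b j))"
      unfolding mmul_def A_def ketbra_def by (rule sum.cong) (simp_all add: algebra_simps)
    also have "\<dots> = a i * cnj (a k) * ipr I a a - a i * cnj (b k) * ipr I a b
         - b i * cnj (a k) * ipr I b a + b i * cnj (b k) * ipr I b b"
      unfolding sum.distrib sum_subtractf sum_distrib_left[symmetric] ipr_def ..
    finally have "mmul I A A i k = a i * cnj (a k) * ipr I a a - a i * cnj (b k) * ipr I a b
         - b i * cnj (a k) * ipr I b a + b i * cnj (b k) * ipr I b b" .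
    then show "mmul I (madj A) A i k = P i k"
      unfolding adjA aa bb ab ba P_def by (simp add: algebra_simps)
  qed
  have tn: "trace_norm I A = Re (mtrace I (msqrt I P))"
    unfolding trace_norm_def AA ..
  show ?thesis
  proof (cases "c\<^sup>2 < 1")
    case True
    define s where "s = sqrt (1 - c\<^sup>2)"
    have s0: "s > 0" using True by (simp add: s_def)
    have ss: "s\<^sup>2 = 1 - c\<^sup>2" using True by (simp add: s_def)
    define u where "u = (\<lambda>k. complex_of_real (1/s) * (b k - c * a k))"
    have au: "ipr I a u = 0"
      unfolding u_def ipr_scale_r ipr_diff_r ipr_scale_r ab aa by simp
    have ua: "ipr I u a = 0" using au by (simp add: ipr_cnj[of I u a])
    have uu: "ipr I u u = 1"
    proof -
      have "ipr I u u = complex_of_real (1/s) * complex_of_real (1/s) * (1 - c * c - c * c + c * c)"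
        unfolding u_def ipr_scale_r ipr_scale_l ipr_diff_r ipr_diff_l ab aa ba bb using s0 by (simp add: field_simps)
      also have "\<dots> = 1"
      proof -
        have "c * c + s * s = 1" using ss by (simp add: power2_eq_square)
        then have "complex_of_real (c * c) + complex_of_real (s * s) = 1" by (metis of_real_1 of_real_add)
        then show ?thesis using s0 by (simp add: field_simps flip: of_real_mult)
      qed
      finally show ?thesis .
    qed
    define Pm where "Pm = (\<lambda>i j. a i * cnj (a j) + u i * cnj (u j))"
    have PmPm: "mmul I Pm Pm i k = Pm i k" for i k
    proof -
      have "mmul I Pm Pm i k = a i * cnj (a k) * ipr I a a + a i * cnj (u k) * ipr I a u
         + u i * cnj (a k) * ipr I u a + u i * cnj (u k) * ipr I u u"
        by (simp add: mmul_def Pm_def ipr_def sum_distrib_left sum.distrib algebra_simps)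
      then show ?thesis unfolding aa au ua uu Pm_def by simp
    qed
    have PsPm: "P i k = complex_of_real (s\<^sup>2) * Pm i k" for i k
    proof -
      have "complex_of_real (s\<^sup>2) * (u i * cnj (u k)) = (b i - c * a i) * cnj (b k - c * a k)"
        using s0 unfolding u_def
        by (simp add: power2_eq_square field_simps flip: of_real_mult)
      then show ?thesis unfolding Pm_def P_def ss
        by (simp add: algebra_simps power2_eq_square)
    qed
    define B0 where "B0 = (\<lambda>i j. if i \<in> I \<and> j \<in> I then complex_of_real s * Pm i j else 0)"
    have form: "(\<Sum>i\<in>I. \<Sum>j\<in>I. cnj (v i) * B0 i j * v j)
        = complex_of_real (s * ((cmod (ipr I a v))\<^sup>2 + (cmod (ipr I u v))\<^sup>2))" for v
    proof -
      have "(\<Sum>i\<in>I. \<Sum>j\<in>I. cnj (v i) * B0 i j * v j)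
          = complex_of_real s * (cnj (ipr I a v) * ipr I a v + cnj (ipr I u v) * ipr I u v)"
        by (simp add: B0_def Pm_def ipr_def sum_product cnj_sum sum_distrib_left sum.distrib algebra_simps)
           (rule arg_cong2[where f="(+)"]; rule sum.swap)
      then show ?thesis by (simp add: complex_norm_square[symmetric] mult.commute)
    qed
    have psdB0: "psd I B0" unfolding psd_def form using s0 by simp
    have B0sq: "mmul I B0 B0 i k = P i k" if "i \<in> I" "k \<in> I" for i k
    proof -
      have "mmul I B0 B0 i k = complex_of_real (s\<^sup>2) * mmul I Pm Pm i k"
        using that by (simp add: mmul_def B0_def sum_distrib_left power2_eq_square algebra_simps)
      then show ?thesis by (simp add: PmPm PsPm)
    qed
    have ms: "msqrt I P = B0"
    proof (rule msqrt_eqI[OF fin psdB0])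
      show "B0 i j = 0" if "i \<notin> I \<or> j \<notin> I" for i j using that by (auto simp: B0_def)
      show "mmul I B0 B0 i j = P i j" if "i \<in> I" "j \<in> I" for i j using B0sq that by blast
      fix B i j assume hB: "psd I B" "\<And>i j. i \<in> I \<Longrightarrow> j \<in> I \<Longrightarrow> mmul I B B i j = P i j" "i \<in> I" "j \<in> I"
      have "B i j = complex_of_real s * Pm i j"
        by (rule sqrt_unique[OF fin _ _ hB(1) _ hB(3,4)]) (use s0 PmPm hB(2) PsPm in auto)
      then show "B i j = B0 i j" using hB by (simp add: B0_def)
    qed
    have "mtrace I B0 = complex_of_real s * (cnj (ipr I a a) + cnj (ipr I u u))"
      by (simp add: mtrace_def B0_def Pm_def ipr_def sum_distrib_left sum.distrib cnj_sum algebra_simps)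
    then have "mtrace I B0 = complex_of_real (2 * s)" by (simp add: aa uu)
    then show ?thesis using tn ms by (simp add: A_def s_def)
  next
    case False
    then have c2: "c\<^sup>2 = 1" using c1 by simp
    define d where "d = (\<lambda>k. a k - c * b k)"
    have "ipr I d d = 1 - c * c - c * c + c * c"
      unfolding d_def ipr_scale_r ipr_scale_l ipr_diff_r ipr_diff_l ab aa ba bb by (simp add: algebra_simps)
    also have "\<dots> = 0" using c2 by (simp add: power2_eq_square flip: of_real_mult)
    finally have "ipr I d d = 0" .
    then have acb: "a k = c * b k" if "k \<in> I" for k
      using ipr_self_zero[OF fin _ that, of d] by (simp add: d_def)
    have P0: "P i k = 0" if "i \<in> I" "k \<in> I" for i k
    proof -
      have "P i k = (complex_of_real c * complex_of_real c + 1 - 2 * complex_of_real c * complex_of_real c) * b i * cnj (b k)"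
        unfolding P_def acb[OF that(1)] acb[OF that(2)] by (simp add: algebra_simps)
      also have "\<dots> = 0" using c2 by (simp add: power2_eq_square flip: of_real_mult)
      finally show ?thesis .
    qed
    have ms: "msqrt I P = (\<lambda>i j. 0)"
    proof (rule msqrt_eqI[OF fin])
      show "psd I (\<lambda>i j. 0)" by (simp add: psd_def)
      show "mmul I (\<lambda>i j. 0) (\<lambda>i j. 0) i j = P i j" if "i \<in> I" "j \<in> I" for i j
        using P0 that by (simp add: mmul_def)
      fix B i j assume hB: "psd I B" "\<And>i j. i \<in> I \<Longrightarrow> j \<in> I \<Longrightarrow> mmul I B B i j = P i j" "i \<in> I" "j \<in> I"
      have "B i j = complex_of_real 0 * (\<lambda>i j. 0) i j"
        by (rule sqrt_unique[OF fin _ _ hB(1) _ hB(3,4)]) (use hB(2) P0 in \<open>auto simp: mmul_def\<close>)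
      then show "B i j = 0" by simp
    qed simp
    show ?thesis using tn ms c2 by (simp add: A_def mtrace_def)
  qed
qed



lemma sum_if_card:
  assumes "finite I" "X \<subseteq> I"
  shows "(\<Sum>x\<in>I. if x \<in> X then c else 0) = of_nat (card X) * (c::complex)"
proof -
  have "(\<Sum>x\<in>I. if x \<in> X then c else 0) = (\<Sum>x\<in>{x\<in>I. x \<in> X}. c)"
    using assms(1) by (rule sum.inter_filter[symmetric])
  also have "{x\<in>I. x \<in> X} = X" using assms(2) by blast
  finally show ?thesis by simp
qed

lemma D_eq:
  assumes "finite S" "m \<le> card S"
  shows "card {xs. length xs = m \<and> distinct xs \<and> set xs \<subseteq> S} = (card S choose m) * fact m"
proof -
  let ?K = "card S"
  have c: "card {xs. length xs = m \<and> distinct xs \<and> set xs \<subseteq> S} = \<Prod>{?K - m + 1 .. ?K}"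
    by (rule card_lists_distinct_length_eq[OF assms])
  have f1: "fact ?K = fact (?K - m) * \<Prod>{Suc (?K - m) .. ?K}"
    using fact_eq_fact_times[of "?K - m" ?K] by simp
  have f2: "fact m * fact (?K - m) * (?K choose m) = fact ?K" by (rule binomial_fact_lemma[OF assms(2)])
  have "fact (?K - m) * \<Prod>{Suc (?K - m) .. ?K} = fact (?K - m) * ((?K choose m) * fact m)"
    using f1 f2 by (simp add: mult_ac)
  then have "\<Prod>{Suc (?K - m) .. ?K} = (?K choose m) * fact m" by simp
  then show ?thesis using c by simp
qed

lemma D_bound:
  fixes K m :: nat
  assumes "0 < K" "m \<le> K"
  shows "1 - real m ^ 2 / real K \<le> real (\<Prod>{K - m + 1 .. K}) / real K ^ m"
proof -
  have r: "\<Prod>{K - m + 1 .. K} = (\<Prod>i<m. K - i)"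
    by (rule prod.reindex_bij_witness[of _ "\<lambda>i. K - i" "\<lambda>i. K - i"]) (use assms in auto)
  have "real (K - m) ^ m = (\<Prod>i<m. real (K - m))" by simp
  also have "\<dots> \<le> (\<Prod>i<m. real (K - i))"
    by (rule prod_mono) auto
  finally have p: "real (K - m) ^ m \<le> real (\<Prod>{K - m + 1 .. K})" unfolding r by simp
  have "1 - real m ^ 2 / real K = 1 + real m * (- (real m / real K))"
    by (simp add: power2_eq_square)
  also have "\<dots> \<le> (1 + (- (real m / real K))) ^ m"
    by (rule Bernoulli_inequality) (use assms in simp)
  also have "(1 + (- (real m / real K))) = real (K - m) / real K"
    using assms by (simp add: of_nat_diff field_simps)
  also have "(real (K - m) / real K) ^ m = real (K - m) ^ m / real K ^ m"
    by (simp add: power_divide)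
  also have "\<dots> \<le> real (\<Prod>{K - m + 1 .. K}) / real K ^ m"
    using p assms by (simp add: divide_right_mono)
  finally show ?thesis .
qed



theorem lemma1:
  shows "\<exists>C::real. \<forall>(N::nat) (S::bool list set) (K::nat) (m::nat).
     S \<subseteq> bitstrings N \<longrightarrow> card S = K \<longrightarrow> 1 \<le> m \<longrightarrow> m \<le> K \<longrightarrow>
     trace_norm (tuples N m)
       (\<lambda>zs ws. tensor_pow m (ketbra (subset_state S) (subset_state S)) zs ws
                - ketbra (uni_state S m) (uni_state S m) zs ws)
     \<le> C * real m / sqrt (real K)"
proof (intro exI[of _ 2] allI impI)
  fix N :: nat and S :: "bool list set" and K m :: nat
  assume hS: "S \<subseteq> bitstrings N" and hK: "card S = K" and m1: "1 \<le> m" and mK: "m \<le> K"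
  have K0: "0 < K" using m1 mK by simp
  have finS: "finite S" using K0 hK card.infinite by force
  define I where "I = tuples N m"
  have I_eq: "I = {zs. set zs \<subseteq> bitstrings N \<and> length zs = m}"
    by (auto simp: I_def tuples_def)
  have finB: "finite (bitstrings N)"
  proof -
    have "bitstrings N = {xs. set xs \<subseteq> (UNIV::bool set) \<and> length xs = N}" by (simp add: bitstrings_def)
    then show ?thesis using finite_lists_length_eq[of "UNIV::bool set" N] by simp
  qed
  have finI: "finite I" unfolding I_eq by (rule finite_lists_length_eq[OF finB])
  define \<psi> where "\<psi> = subset_state S"
  define a where "a = (\<lambda>zs. \<Prod>k<m. \<psi> (zs ! k))"
  define b where "b = uni_state S m"
  define \<alpha> :: real where "\<alpha> = 1 / sqrt (real K) ^ m"
  define Aset where "Aset = {xs. set xs \<subseteq> S \<and> length xs = m}"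
  define Dset where "Dset = {xs. length xs = m \<and> distinct xs \<and> set xs \<subseteq> S}"
  define Dn where "Dn = card Dset"
  define \<beta> :: real where "\<beta> = 1 / sqrt (real Dn)"
  have AI: "Aset \<subseteq> I" using hS by (auto simp: Aset_def I_eq)
  have DA: "Dset \<subseteq> Aset" by (auto simp: Aset_def Dset_def)
  have DI: "Dset \<subseteq> I" using AI DA by blast
  have cardA: "card Aset = K ^ m" unfolding Aset_def hK[symmetric] by (rule card_lists_length_eq[OF finS])
  have Dn_eq: "Dn = (K choose m) * fact m" unfolding Dn_def Dset_def hK[symmetric]
    by (rule D_eq[OF finS]) (simp add: hK mK)
  have Dn_prod: "Dn = \<Prod>{K - m + 1 .. K}" unfolding Dn_def Dset_def hK[symmetric]
    by (rule card_lists_distinct_length_eq[OF finS]) (simp add: hK mK)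
  have Dpos: "0 < Dn" using Dn_eq mK by simp
  have DnA: "Dn \<le> K ^ m" unfolding Dn_def cardA[symmetric]
    by (rule card_mono[OF _ DA]) (simp add: Aset_def finS finite_lists_length_eq)
  have a_form: "a zs = (if zs \<in> Aset then complex_of_real \<alpha> else 0)" if "zs \<in> I" for zs
  proof -
    have len: "length zs = m" using that by (simp add: I_eq)
    show ?thesis
    proof (cases "set zs \<subseteq> S")
      case True
      then have "\<psi> (zs ! k) = complex_of_real (1 / sqrt (real K))" if "k < m" for k
      proof -
        have "zs ! k \<in> S" using that len True nth_mem[of k zs] by auto
        then show ?thesis by (simp add: \<psi>_def subset_state_def hK)
      qed
      then have "a zs = (\<Prod>k<m. complex_of_real (1 / sqrt (real K)))"
        unfolding a_def by (intro prod.cong) auto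
      then show ?thesis using True len by (simp add: Aset_def \<alpha>_def power_divide)
    next
      case False
      then obtain x where x: "x \<in> set zs" "x \<notin> S" by auto
      then obtain k where k: "k < m" "zs ! k \<notin> S" using len by (metis in_set_conv_nth)
      then have "\<psi> (zs ! k) = 0" by (simp add: \<psi>_def subset_state_def)
      then have "a zs = 0" unfolding a_def using k by (auto intro: prod_zero)
      then show ?thesis using False by (simp add: Aset_def)
    qed
  qed
  have b_form: "b zs = (if zs \<in> Dset then complex_of_real \<beta> else 0)" for zs
  proof -
    define Sets where "Sets = {S'. S' \<subseteq> S \<and> card S' = m}"
    have finSets: "finite Sets" unfolding Sets_def using finS by (auto intro: finite_subset[of _ "Pow S"])
    have utk: "unique_type_ket S' zs = (if S' = set zs then (if distinct zs then complex_of_real (1 / sqrt (fact m)) else 0) else 0)"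
      if "S' \<in> Sets" for S'
    proof -
      have fS': "finite S'" and cS': "card S' = m" using that finS by (auto simp: Sets_def intro: finite_subset)
      define X where "X = {os. distinct os \<and> set os = S'}"
      have finX: "finite X"
        by (rule finite_subset[OF _ finite_subset_distinct[OF fS']]) (auto simp: X_def)
      have "(\<Sum>os\<in>X. basis_ket os zs) = (\<Sum>os\<in>X. if zs = os then 1 else 0)"
        by (simp add: basis_ket_def)
      also have "\<dots> = (if zs \<in> X then 1 else 0)" using finX by simp
      finally have "(\<Sum>os\<in>X. basis_ket os zs) = (if zs \<in> X then 1 else 0)" .
      then show ?thesis unfolding unique_type_ket_def X_def[symmetric] using cS'
        by (auto simp: X_def)
    qed
    have "b zs = complex_of_real (1 / sqrt (real (K choose m))) *
        (\<Sum>S'\<in>Sets. if S' = set zs then (if distinct zs then complex_of_real (1 / sqrt (fact m)) else 0) else 0)"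
      unfolding b_def uni_state_def Sets_def[symmetric] hK
      by (simp add: utk cong: sum.cong)
    also have "\<dots> = (if set zs \<in> Sets \<and> distinct zs then complex_of_real (1 / sqrt (real (K choose m))) * complex_of_real (1 / sqrt (fact m)) else 0)"
      using finSets by simp
    also have "\<dots> = (if zs \<in> Dset then complex_of_real \<beta> else 0)"
    proof -
      have "(set zs \<in> Sets \<and> distinct zs) = (zs \<in> Dset)"
        by (auto simp: Sets_def Dset_def distinct_card)
      moreover have "complex_of_real (1 / sqrt (real (K choose m))) * complex_of_real (1 / sqrt (fact m)) = complex_of_real \<beta>"
        by (simp add: \<beta>_def Dn_eq real_sqrt_mult flip: of_real_mult)
      ultimately show ?thesis by simp
    qed
    finally show ?thesis .
  qed
  have aa: "ipr I a a = 1"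
  proof -
    have "ipr I a a = (\<Sum>zs\<in>I. if zs \<in> Aset then complex_of_real (\<alpha>\<^sup>2) else 0)"
      unfolding ipr_def by (rule sum.cong) (simp_all add: a_form power2_eq_square)
    also have "\<dots> = of_nat (K ^ m) * complex_of_real (\<alpha>\<^sup>2)" by (simp add: sum_if_card[OF finI AI] cardA)
    also have "\<dots> = 1"
    proof -
      have "(sqrt (real K) ^ m)\<^sup>2 = real K ^ m" unfolding real_sqrt_power[symmetric] by simp
      then have "real (K ^ m) * \<alpha>\<^sup>2 = 1" using K0 by (simp add: \<alpha>_def power_divide)
      then have "complex_of_real (real (K ^ m) * \<alpha>\<^sup>2) = 1" by simp
      then show ?thesis by (simp only: of_real_mult of_real_of_nat_eq)
    qed
    finally show ?thesis .
  qed
  have bb: "ipr I b b = 1"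
  proof -
    have "ipr I b b = (\<Sum>zs\<in>I. if zs \<in> Dset then complex_of_real (\<beta>\<^sup>2) else 0)"
      unfolding ipr_def by (rule sum.cong) (simp_all add: b_form power2_eq_square)
    also have "\<dots> = of_nat Dn * complex_of_real (\<beta>\<^sup>2)" by (simp add: sum_if_card[OF finI DI] Dn_def)
    also have "\<dots> = 1"
    proof -
      have "real Dn * \<beta>\<^sup>2 = 1" using Dpos by (simp add: \<beta>_def power_divide)
      then have "complex_of_real (real Dn * \<beta>\<^sup>2) = 1" by simp
      then show ?thesis by (simp only: of_real_mult of_real_of_nat_eq)
    qed
    finally show ?thesis .
  qed
  define c where "c = real Dn * \<alpha> * \<beta>"
  have ab: "ipr I a b = complex_of_real c"
  proof -
    have "ipr I a b = (\<Sum>zs\<in>I. if zs \<in> Dset then complex_of_real (\<alpha> * \<beta>) else 0)"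
      unfolding ipr_def by (rule sum.cong) (use DA in \<open>auto simp: a_form b_form\<close>)
    also have "\<dots> = of_nat Dn * complex_of_real (\<alpha> * \<beta>)" by (simp add: sum_if_card[OF finI DI] Dn_def)
    also have "\<dots> = complex_of_real c" by (simp add: c_def)
    finally show ?thesis .
  qed
  have c2: "c\<^sup>2 = real Dn / real K ^ m"
  proof -
    have "(sqrt (real K) ^ m)\<^sup>2 = real K ^ m" unfolding real_sqrt_power[symmetric] by simp
    then have q: "sqrt (real K) ^ m * sqrt (real K) ^ m = real K ^ m" by (simp add: power2_eq_square)
    have r: "sqrt (real Dn) * sqrt (real Dn) = real Dn" by simp
    have "c\<^sup>2 = real Dn * real Dn / ((sqrt (real K) ^ m * sqrt (real K) ^ m) * (sqrt (real Dn) * sqrt (real Dn)))"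
    proof -
      have g: "(x * (1 / q) * (1 / r))\<^sup>2 = x * x / ((q * q) * (r * r))" for x q r :: real
        by (simp add: power2_eq_square divide_inverse inverse_mult_distrib mult_ac)
      show ?thesis unfolding c_def \<alpha>_def \<beta>_def by (rule g)
    qed
    also have "\<dots> = real Dn * real Dn / (real K ^ m * real Dn)" unfolding q r ..
    also have "\<dots> = real Dn / real K ^ m" using Dpos by simp
    finally show ?thesis .
  qed
  have c1: "c\<^sup>2 \<le> 1"
  proof -
    have "real Dn \<le> real K ^ m" using DnA by (metis of_nat_le_iff of_nat_power)
    then show ?thesis unfolding c2 using K0 by simp
  qed
  have tn: "trace_norm I (\<lambda>i j. ketbra a a i j - ketbra b b i j) = 2 * sqrt (1 - c\<^sup>2)"
    by (rule tn_pure[OF finI aa bb ab c1])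
  have fun_eq: "(\<lambda>zs ws. tensor_pow m (ketbra (subset_state S) (subset_state S)) zs ws
                - ketbra (uni_state S m) (uni_state S m) zs ws) = (\<lambda>i j. ketbra a a i j - ketbra b b i j)"
    by (intro ext) (simp add: tensor_pow_def ketbra_def a_def b_def \<psi>_def prod.distrib)
  have bound: "1 - c\<^sup>2 \<le> real m ^ 2 / real K"
    using D_bound[OF K0 mK] unfolding c2 Dn_prod by simp
  have "sqrt (1 - c\<^sup>2) \<le> sqrt (real m ^ 2 / real K)" using bound by (rule real_sqrt_le_mono)
  also have "\<dots> = real m / sqrt (real K)" by (simp add: real_sqrt_divide)
  finally have "2 * sqrt (1 - c\<^sup>2) \<le> 2 * real m / sqrt (real K)" by simp
  then show "trace_norm (tuples N m)
       (\<lambda>zs ws. tensor_pow m (ketbra (subset_state S) (subset_state S)) zs ws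
                - ketbra (uni_state S m) (uni_state S m) zs ws)
     \<le> 2 * real m / sqrt (real K)" using tn unfolding fun_eq I_def by simp
qed


end
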